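(* Consider the Gaussian linear model $y=X\beta_0+\varepsilon$, $\varepsilon\sim N_n(0,\sigma_0^2I_n)$ with known $\sigma_0^2$, and suppose (A1) $s_0\log p=o(n)$, $s_0\log p\to\infty$, and (A11) $\|X\|_{\mathrm{op}}=O(\sqrt n)$ hold. Let $m_n=Cs_0L_n$, $\bar\epsilon_n^2=s_0\log m_n/n$ with $s_0\log m_n\to\infty$, and $\mathcal A_n=\{A:S_0\subseteq A,\ |A|\le m_n\}$. Assume uniform prior concentration: there is a constant $C_1>0$ such that for all sufficiently large $n$ and all $A\in\mathcal A_n$, $\Pi_A(\|\beta-\beta_0\|_2\le\bar\epsilon_n\mid\tilde z^* )\ge\exp(-C_1n\bar\epsilon_n^2)$. Then there is a constant $C_D>0$ such that for every $\delta>0$ there are events $\Omega_{n,A}$ with $\sup_{A\in\mathcal A_n}P_{\beta_0}(\Omega_{n,A}^c)\to0$ and, on $\Omega_{n,A}$, $$D_{n,A}:=\int_{\Theta(A)}\frac{f_\beta(y)}{f_{\beta_0}(y)}\,d\Pi_A(\beta\mid\tilde z^* )\ \ge\ \exp\big(-(C_D+\delta)n\bar\epsilon_n^2\big).$$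
   Context: $S_0=\{j:\beta_{0j}\ne0\}$, $s_0=|S_0|$, $p=p_n$; $L_n$ is a sequence growing at most polylogarithmically in $p$ and $C>0$ a constant. $\Theta(A)=\{\beta\in\mathbb R^p:\beta_j=0\ \forall j\notin A\}$. $f_\beta$ is the $N_n(X\beta,\sigma_0^2I_n)$ density and $P_{\beta_0}$ the law of $y$ under $\beta_0$. $\Pi_A(\cdot\mid\tilde z^* )$ is the guided regularized horseshoe prior restricted to coordinates in $A$ (with $\beta_{A^c}=0$): with $\kappa^2(z;\lambda,\tau,c,\eta)=\dfrac{c^2\tau^2\lambda^2e^{\eta z}}{c^2+\tau^2\lambda^2e^{\eta z}}$, independently $\lambda_j\sim C^+(0,1)$, $\tau\sim C^+(0,\tau_0)$, $c^2\sim\mathrm{IG}(a_c,b_c)$, $\eta\sim N^+(0,\sigma_\eta^2)$, and $\beta_j\sim N(0,\sigma_0^2\kappa^2(\tilde z_j^*;\lambda_j,\tau,c,\eta))$ for $j\in A$, for a fixed guidance vector $\tilde z^*$. *)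

theory Defs
  imports "HOL-Probability.Probability"
begin

definition half_cauchy_density :: "real \<Rightarrow> real \<Rightarrow> real" where
  "half_cauchy_density s x = (if x > 0 then 2 / (pi * s * (1 + (x / s)^2)) else 0)"

definition half_normal_density :: "real \<Rightarrow> real \<Rightarrow> real" where
  "half_normal_density v x = (if x > 0 then 2 * normal_density 0 (sqrt v) x else 0)"

definition inv_gamma_density :: "real \<Rightarrow> real \<Rightarrow> real \<Rightarrow> real" where
  "inv_gamma_density a b x =
     (if x > 0 then b powr a / Gamma a * x powr (-a - 1) * exp (- b / x) else 0)"

definition kappa2 :: "real \<Rightarrow> real \<Rightarrow> real \<Rightarrow> real \<Rightarrow> real \<Rightarrow> real" where
  "kappa2 z lam tau c2 eta =
     c2 * tau^2 * lam^2 * exp (eta * z) / (c2 + tau^2 * lam^2 * exp (eta * z))"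

definition ghs_hyper :: "nat set \<Rightarrow> real \<Rightarrow> real \<Rightarrow> real \<Rightarrow> real
    \<Rightarrow> ((nat \<Rightarrow> real) \<times> real \<times> real \<times> real) measure" where
  "ghs_hyper A tau0 ac bc sig_eta =
     (PiM A (\<lambda>_. density lborel (half_cauchy_density 1)))
     \<Otimes>\<^sub>M (density lborel (half_cauchy_density tau0)
     \<Otimes>\<^sub>M (density lborel (inv_gamma_density ac bc)
     \<Otimes>\<^sub>M density lborel (half_normal_density (sig_eta^2))))"

text \<open>The prior Pi_A( . | z): a measure on the coordinates (beta_j)_{j\<in>A}
  (the remaining coordinates are 0, see \<open>ext_coef\<close>).  sigma0 is the known noise sd.\<close>
definition ghs_prior :: "real \<Rightarrow> real \<Rightarrow> real \<Rightarrow> real \<Rightarrow> real \<Rightarrow> (nat \<Rightarrow> real)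
    \<Rightarrow> nat set \<Rightarrow> (nat \<Rightarrow> real) measure" where
  "ghs_prior sigma0 tau0 ac bc sig_eta z A =
     ghs_hyper A tau0 ac bc sig_eta \<bind>
       (\<lambda>(lam, tau, c2, eta).
          PiM A (\<lambda>j. density lborel
                   (normal_density 0 (sigma0 * sqrt (kappa2 (z j) (lam j) tau c2 eta)))))"

definition ext_coef :: "nat set \<Rightarrow> (nat \<Rightarrow> real) \<Rightarrow> nat \<Rightarrow> real" where
  "ext_coef A b j = (if j \<in> A then b j else 0)"

definition matvec :: "nat \<Rightarrow> (nat \<Rightarrow> nat \<Rightarrow> real) \<Rightarrow> (nat \<Rightarrow> real) \<Rightarrow> nat \<Rightarrow> real" where
  "matvec p X b i = (\<Sum>j<p. X i j * b j)"

definition l2norm :: "nat \<Rightarrow> (nat \<Rightarrow> real) \<Rightarrow> real" where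
  "l2norm d v = sqrt (\<Sum>j<d. (v j)^2)"

definition op_norm :: "nat \<Rightarrow> nat \<Rightarrow> (nat \<Rightarrow> nat \<Rightarrow> real) \<Rightarrow> real" where
  "op_norm n p X = Sup {l2norm n (matvec p X v) | v. l2norm p v \<le> 1}"

definition lik :: "nat \<Rightarrow> nat \<Rightarrow> (nat \<Rightarrow> nat \<Rightarrow> real) \<Rightarrow> real \<Rightarrow> (nat \<Rightarrow> real)
    \<Rightarrow> (nat \<Rightarrow> real) \<Rightarrow> real" where
  "lik n p X sigma0 b y = (\<Prod>i<n. normal_density (matvec p X b i) sigma0 (y i))"

definition data_law :: "nat \<Rightarrow> nat \<Rightarrow> (nat \<Rightarrow> nat \<Rightarrow> real) \<Rightarrow> real \<Rightarrow> (nat \<Rightarrow> real)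
    \<Rightarrow> (nat \<Rightarrow> real) measure" where
  "data_law n p X sigma0 b0 =
     PiM {..<n} (\<lambda>i. density lborel (normal_density (matvec p X b0 i) sigma0))"

definition support :: "nat \<Rightarrow> (nat \<Rightarrow> real) \<Rightarrow> nat set" where
  "support p b = {j. j < p \<and> b j \<noteq> 0}"

definition model_class :: "nat \<Rightarrow> nat set \<Rightarrow> real \<Rightarrow> nat set set" where
  "model_class p S0 m = {A. A \<subseteq> {..<p} \<and> S0 \<subseteq> A \<and> real (card A) \<le> m}"

definition Dn :: "nat \<Rightarrow> nat \<Rightarrow> (nat \<Rightarrow> nat \<Rightarrow> real) \<Rightarrow> real \<Rightarrow> (nat \<Rightarrow> real)
    \<Rightarrow> (nat \<Rightarrow> real) measure \<Rightarrow> nat set \<Rightarrow> (nat \<Rightarrow> real) \<Rightarrow> real" where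
  "Dn n p X sigma0 b0 PiA A y =
     (\<integral>b. lik n p X sigma0 (ext_coef A b) y / lik n p X sigma0 b0 y \<partial>PiA)"

end

theory Submission
  imports Defs
begin


lemma coord_distributed:
  fixes mu :: "nat \<Rightarrow> real" and \<sigma> :: real
  assumes "\<sigma> > 0" "i < n"
  shows "distributed (PiM {..<n} (\<lambda>i. density lborel (normal_density (mu i) \<sigma>))) lborel (\<lambda>y. y i)
           (\<lambda>x. ennreal (normal_density (mu i) \<sigma> x))"
proof -
  let ?M = "\<lambda>i. density lborel (normal_density (mu i) \<sigma>)"
  have ps: "\<And>i. i \<in> {..<n} \<Longrightarrow> prob_space (?M i)" using assms prob_space_normal_density by auto
  have "distr (PiM {..<n} ?M) lborel (\<lambda>y. y i) = distr (PiM {..<n} ?M) (?M i) (\<lambda>y. y i)"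
    by (rule distr_cong) auto
  also have "\<dots> = ?M i" using distr_PiM_component[of "{..<n}" ?M i] ps assms by auto
  finally have d: "distr (PiM {..<n} ?M) lborel (\<lambda>y. y i) = ?M i" .
  have "(\<lambda>y. y i) \<in> measurable (PiM {..<n} ?M) (?M i)"
    by (rule measurable_component_singleton) (use assms in auto)
  then have m: "(\<lambda>y. y i) \<in> measurable (PiM {..<n} ?M) lborel"
    by (subst (asm) measurable_cong_sets[OF refl sets_density])
  show ?thesis unfolding distributed_def using d m by simp
qed

lemma coord_indep:
  fixes mu :: "nat \<Rightarrow> real" and \<sigma> :: real
  assumes "\<sigma> > 0" "n > 0"
  shows "prob_space.indep_vars (PiM {..<n} (\<lambda>i. density lborel (normal_density (mu i) \<sigma>)))
      (\<lambda>i. density lborel (normal_density (mu i) \<sigma>)) (\<lambda>i y. y i) {..<n}"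
proof -
  let ?M = "\<lambda>i. density lborel (normal_density (mu i) \<sigma>)"
  let ?P = "PiM {..<n} ?M"
  have ps: "\<And>i. i \<in> {..<n} \<Longrightarrow> prob_space (?M i)" using assms prob_space_normal_density by auto
  interpret prob_space ?P by (rule prob_space_PiM) (use ps in auto)
  show ?thesis
  proof (subst indep_vars_iff_distr_eq_PiM')
    show "{..<n} \<noteq> {}" using assms by auto
    show "\<And>i. i \<in> {..<n} \<Longrightarrow> random_variable (?M i) (\<lambda>y. y i)"
      by (auto intro!: measurable_component_singleton)
    have "distr ?P ?P (\<lambda>x. \<lambda>i\<in>{..<n}. x i) = distr ?P ?P (\<lambda>x. x)"
      by (rule distr_cong) (simp_all add: space_PiM PiE_restrict)
    also have "\<dots> = ?P" by (rule distr_id)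
    also have "\<dots> = PiM {..<n} (\<lambda>i. distr ?P (?M i) (\<lambda>y. y i))"
      proof (rule PiM_cong)
      fix x assume "x \<in> {..<n}"
      then show "?M x = distr ?P (?M x) (\<lambda>y. y x)"
        by (intro distr_PiM_component[symmetric] ps)
    qed simp
    finally show "distr ?P ?P (\<lambda>x. \<lambda>i\<in>{..<n}. x i) = PiM {..<n} (\<lambda>i. distr ?P (?M i) (\<lambda>y. y i))" .
  qed
qed

lemma gauss_tail:
  fixes mu v :: "nat \<Rightarrow> real" and \<sigma> t :: real and n :: nat
  assumes \<sigma>: "\<sigma> > 0" and t: "t > 0"
  shows "measure (PiM {..<n} (\<lambda>i. density lborel (normal_density (mu i) \<sigma>)))
     {y \<in> space (PiM {..<n} (\<lambda>i. density lborel (normal_density (mu i) \<sigma>))).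
        (\<Sum>i<n. (y i - mu i) * v i) \<le> -t}
     \<le> \<sigma>\<^sup>2 * (\<Sum>i<n. (v i)\<^sup>2) / t\<^sup>2"
proof -
  let ?M = "\<lambda>i. density lborel (normal_density (mu i) \<sigma>)"
  let ?P = "PiM {..<n} ?M"
  have ps: "\<And>i. i \<in> {..<n} \<Longrightarrow> prob_space (?M i)" using \<sigma> prob_space_normal_density by auto
  interpret prob_space ?P by (rule prob_space_PiM) (use ps in auto)
  define I where "I = {i. i < n \<and> v i \<noteq> 0}"
  have Isub: "I \<subseteq> {..<n}" "finite I" unfolding I_def by auto
  have sumI: "(\<Sum>i<n. (y i - mu i) * v i) = (\<Sum>i\<in>I. -(v i * mu i) + v i * y i)" for y
  proof -
    have "(\<Sum>i<n. (y i - mu i) * v i) = (\<Sum>i\<in>I. (y i - mu i) * v i)"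
      by (rule sum.mono_neutral_right) (auto simp: I_def)
    also have "\<dots> = (\<Sum>i\<in>I. -(v i * mu i) + v i * y i)"
      by (rule sum.cong) (auto simp: algebra_simps)
    finally show ?thesis .
  qed
  have sumv: "(\<Sum>i<n. (v i)\<^sup>2) = (\<Sum>i\<in>I. (v i)\<^sup>2)"
    by (rule sum.mono_neutral_right) (auto simp: I_def)
  show ?thesis
  proof (cases "I = {}")
    case True
    then have "{y \<in> space ?P. (\<Sum>i<n. (y i - mu i) * v i) \<le> -t} = {}"
      using sumI t by auto
    then show ?thesis by (simp only: measure_empty) (simp add: sum_nonneg)
  next
    case False
    then have n0: "n > 0" using Isub by auto
    define X where "X = (\<lambda>i y. -(v i * mu i) + v i * (y::nat \<Rightarrow> real) i)"
    have ind0: "indep_vars ?M (\<lambda>i y. y i) {..<n}"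
      using coord_indep[OF \<sigma> n0] by simp
    have "indep_vars (\<lambda>_. borel) (\<lambda>i y. (\<lambda>x. -(v i * mu i) + v i * x) (y i)) {..<n}"
    proof (rule indep_vars_compose2[OF ind0])
      fix i assume "i \<in> {..<n}"
      have "(\<lambda>x. -(v i * mu i) + v i * x) \<in> borel_measurable borel" by measurable
      then show "(\<lambda>x. -(v i * mu i) + v i * x) \<in> borel_measurable (?M i)"
        by (subst measurable_cong_sets[OF sets_density refl]) simp
    qed
    then have ind: "indep_vars (\<lambda>_. borel) X I"
      unfolding X_def by (rule indep_vars_subset) (rule Isub)
    have dist: "distributed ?P lborel (X i) (normal_density 0 (\<bar>v i\<bar> * \<sigma>))" if "i \<in> I" for i
    proof -
      have vi: "v i \<noteq> 0" "i < n" using that by (auto simp: I_def)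
      have "distributed ?P lborel (\<lambda>y. -(v i * mu i) + v i * y i)
          (normal_density (-(v i * mu i) + v i * mu i) (\<bar>v i\<bar> * \<sigma>))"
        by (rule normal_density_affine[OF coord_distributed[OF \<sigma> vi(2)] \<sigma> vi(1)])
      then show ?thesis unfolding X_def by simp
    qed
    define s where "s = sqrt (\<Sum>i\<in>I. (\<bar>v i\<bar> * \<sigma>)\<^sup>2)"
    have D0: "distributed ?P lborel (\<lambda>y. \<Sum>i\<in>I. X i y) (normal_density (\<Sum>i\<in>I. 0) s)"
      unfolding s_def
      by (rule sum_indep_normal[OF Isub(2) False ind]) (use \<sigma> dist in \<open>auto simp: I_def\<close>)
    then have D: "distributed ?P lborel (\<lambda>y. \<Sum>i\<in>I. X i y) (normal_density 0 s)" by simp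
    have s2: "s\<^sup>2 = \<sigma>\<^sup>2 * (\<Sum>i<n. (v i)\<^sup>2)"
      unfolding s_def sumv by (simp add: sum_nonneg power_mult_distrib sum_distrib_left algebra_simps)
    have spos: "s > 0" unfolding s_def
      using False \<sigma> Isub by (intro real_sqrt_gt_zero sum_pos) (auto simp: I_def)
    have E: "expectation (\<lambda>y. \<Sum>i\<in>I. X i y) = 0"
      by (rule normal_distributed_expectation[OF spos D])
    have V: "variance (\<lambda>y. \<Sum>i\<in>I. X i y) = s\<^sup>2"
      by (rule normal_distributed_variance[OF spos D])
    have meas: "(\<lambda>y. \<Sum>i\<in>I. X i y) \<in> borel_measurable ?P"
      using D by (simp add: distributed_def)
    have int: "integrable ?P (\<lambda>y. (\<Sum>i\<in>I. X i y)\<^sup>2)"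
    proof -
      have "integrable lborel (\<lambda>x. normal_density 0 s x * (x - 0) ^ 2)"
        by (rule integrable_normal_moment[OF spos])
      then show ?thesis
        using distributed_integrable[OF D, of "\<lambda>x. x\<^sup>2"] by simp
    qed
    have Ch: "prob {y \<in> space ?P. \<bar>(\<Sum>i\<in>I. X i y) - 0\<bar> \<ge> t} \<le> s\<^sup>2 / t\<^sup>2"
      using Chebyshev_inequality[OF meas int t] E V by simp
    have "prob {y \<in> space ?P. (\<Sum>i<n. (y i - mu i) * v i) \<le> -t}
        \<le> prob {y \<in> space ?P. \<bar>(\<Sum>i\<in>I. X i y) - 0\<bar> \<ge> t}"
      by (rule finite_measure_mono) (use meas sumI t in \<open>auto simp: X_def\<close>)
    also note Ch
    finally show ?thesis using s2 by simp
  qed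
qed


lemma l2norm_scale: "l2norm d (\<lambda>j. c * v j) = \<bar>c\<bar> * l2norm d v"
proof -
  have "(\<Sum>j<d. (c * v j)\<^sup>2) = c\<^sup>2 * (\<Sum>j<d. (v j)\<^sup>2)"
    by (simp add: power_mult_distrib sum_distrib_left)
  then show ?thesis unfolding l2norm_def by (simp add: real_sqrt_mult)
qed

lemma l2norm_nonneg: "l2norm d v \<ge> 0"
  unfolding l2norm_def by (simp add: sum_nonneg)

lemma matvec_scale: "matvec p X (\<lambda>j. c * v j) i = c * matvec p X v i"
  unfolding matvec_def by (simp add: sum_distrib_left algebra_simps)

lemma matvec_frob: "l2norm n (matvec p X v) \<le> sqrt (\<Sum>i<n. \<Sum>j<p. (X i j)\<^sup>2) * l2norm p v"
proof -
  have "(\<Sum>i<n. (matvec p X v i)\<^sup>2) \<le> (\<Sum>i<n. (\<Sum>j<p. (X i j)\<^sup>2) * (\<Sum>j<p. (v j)\<^sup>2))"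
    unfolding matvec_def by (rule sum_mono) (rule Cauchy_Schwarz_ineq_sum)
  also have "\<dots> = (\<Sum>i<n. \<Sum>j<p. (X i j)\<^sup>2) * (\<Sum>j<p. (v j)\<^sup>2)"
    by (simp add: sum_distrib_right)
  finally show ?thesis unfolding l2norm_def
    by (metis real_sqrt_le_iff real_sqrt_mult)
qed

lemma op_norm_props:
  shows "op_norm n p X \<ge> 0" and "l2norm n (matvec p X v) \<le> op_norm n p X * l2norm p v"
proof -
  define S where "S = {l2norm n (matvec p X v) | v. l2norm p v \<le> 1}"
  define F where "F = sqrt (\<Sum>i<n. \<Sum>j<p. (X i j)\<^sup>2)"
  have F0: "F \<ge> 0" unfolding F_def by (simp add: sum_nonneg)
  have bdd: "bdd_above S"
  proof (rule bdd_aboveI)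
    fix x assume "x \<in> S"
    then obtain w where x: "x = l2norm n (matvec p X w)" "l2norm p w \<le> 1" unfolding S_def by auto
    have "x \<le> F * l2norm p w" using x matvec_frob[of n p X w] unfolding F_def by simp
    also have "\<dots> \<le> F * 1" using x F0 by (intro mult_left_mono) auto
    finally show "x \<le> F" by simp
  qed
  have z: "l2norm n (matvec p X (\<lambda>_. 0)) \<in> S" unfolding S_def by (auto simp: l2norm_def)
  have z0: "l2norm n (matvec p X (\<lambda>_. 0)) = 0" by (simp add: l2norm_def matvec_def)
  have opS: "op_norm n p X = Sup S" unfolding op_norm_def S_def by simp
  show op0: "op_norm n p X \<ge> 0" unfolding opS using cSup_upper[OF z bdd] z0 by simp
  show "l2norm n (matvec p X v) \<le> op_norm n p X * l2norm p v"
  proof (cases "l2norm p v = 0")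
    case True
    then have "(\<Sum>j<p. (v j)\<^sup>2) = 0" unfolding l2norm_def by simp
    then have "\<forall>j\<in>{..<p}. (v j)\<^sup>2 = 0" by (subst (asm) sum_nonneg_eq_0_iff) auto
    then have "matvec p X v i = 0" for i unfolding matvec_def by simp
    then show ?thesis using True by (simp add: l2norm_def)
  next
    case False
    define t where "t = l2norm p v"
    have t0: "t > 0" using False l2norm_nonneg[of p v] unfolding t_def by simp
    define w where "w = (\<lambda>j. (1/t) * v j)"
    have "l2norm p w = 1" unfolding w_def l2norm_scale t_def[symmetric] using t0 by simp
    then have "l2norm n (matvec p X w) \<in> S" unfolding S_def by auto
    then have "l2norm n (matvec p X w) \<le> op_norm n p X" unfolding opS by (rule cSup_upper[OF _ bdd])
    moreover have "l2norm n (matvec p X w) = (1/t) * l2norm n (matvec p X v)"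
      unfolding w_def matvec_scale l2norm_scale[of n "1/t" "matvec p X v"] using t0 by simp
    ultimately have "l2norm n (matvec p X v) \<le> op_norm n p X * t"
      using t0 by (simp add: field_simps)
    then show ?thesis unfolding t_def .
  qed
qed


lemma emeasure_measure_of_le: "emeasure (measure_of \<Omega> A \<mu>) B \<le> \<mu> B"
  by (simp add: emeasure_measure_of_conv)

lemma emeasure_distr_le: "emeasure (distr M N f) B \<le> emeasure M (space M)"
proof -
  have "emeasure (distr M N f) B \<le> emeasure M (f -` B \<inter> space M)"
    unfolding distr_def by (rule emeasure_measure_of_le)
  also have "\<dots> \<le> emeasure M (space M)" by (rule emeasure_space)
  finally show ?thesis .
qed

lemma emeasure_bind_le: "emeasure (bind M f) B \<le> emeasure M (space M)"
proof (cases "space M = {}")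
  case True
  then show ?thesis using emeasure_space[of "count_space {}" B] by (simp add: bind_def)
next
  case False
  define S where "S = subprob_algebra (f (SOME x. x \<in> space M))"
  define D where "D = distr M S f"
  have "bind M f = join D" using False unfolding bind_def D_def S_def by simp
  then have "emeasure (bind M f) B \<le> (\<integral>\<^sup>+ M'. emeasure M' B \<partial>D)"
    unfolding join_def using emeasure_measure_of_le by metis
  also have "\<dots> \<le> (\<integral>\<^sup>+ M'. 1 \<partial>D)"
  proof (rule nn_integral_mono)
    fix M' assume "M' \<in> space D"
    then have "subprob_space M'" unfolding D_def S_def by (simp add: space_subprob_algebra)
    then show "emeasure M' B \<le> 1" by (rule subprob_space.subprob_emeasure_le_1)
  qed
  also have "\<dots> = emeasure D (space D)" by simp
  also have "\<dots> \<le> emeasure M (space M)" unfolding D_def by (rule emeasure_distr_le)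
  finally show ?thesis .
qed


lemma fin_majorant:
  fixes f :: "real \<Rightarrow> real" and c e :: real
  assumes fm: "f \<in> borel_measurable borel" and e: "e < -1"
    and nn: "\<And>x. 0 \<le> f x" and neg: "\<And>x. x \<le> 0 \<Longrightarrow> f x = 0"
    and mid: "\<And>x. 0 < x \<Longrightarrow> x \<le> 1 \<Longrightarrow> f x \<le> c"
    and tail: "\<And>x. 1 \<le> x \<Longrightarrow> f x \<le> c * x powr e"
  shows "(\<integral>\<^sup>+x. ennreal (f x) \<partial>lborel) < \<infinity>"
proof -
  have c0: "c \<ge> 0" using mid[of 1] nn[of 1] by simp
  have pw: "((\<lambda>x. x powr e) has_integral -(1 powr (e+1)) / (e+1)) {1..}"
    by (rule has_integral_powr_to_inf) (use e in auto)
  have I2: "(\<integral>\<^sup>+x. ennreal (indicator {1..} x * x powr e) \<partial>lborel) = ennreal (-(1 powr (e+1)) / (e+1))"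
    by (rule nn_integral_has_integral_lebesgue[OF _ pw]) simp
  have "(\<integral>\<^sup>+x. ennreal (f x) \<partial>lborel)
      \<le> (\<integral>\<^sup>+x. ennreal c * indicator {0..1} x + ennreal c * ennreal (indicator {1..} x * x powr e) \<partial>lborel)"
  proof (rule nn_integral_mono)
    fix x :: real
    show "ennreal (f x) \<le> ennreal c * indicator {0..1} x + ennreal c * ennreal (indicator {1..} x * x powr e)"
    proof (cases "x \<le> 0")
      case True then show ?thesis using neg by simp
    next
      case False
      show ?thesis
      proof (cases "x \<le> 1")
        case True
        then have "ennreal (f x) \<le> ennreal c" using mid[of x] False by (intro ennreal_leI) simp
        also have "\<dots> \<le> ennreal c * indicator {0..1} x + ennreal c * ennreal (indicator {1..} x * x powr e)"
          using True False by simp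
        finally show ?thesis .
      next
        case F2: False
        then have "ennreal (f x) \<le> ennreal c * ennreal (indicator {1..} x * x powr e)"
          using tail[of x] c0 by (simp add: ennreal_mult[symmetric])
        also have "\<dots> \<le> ennreal c * indicator {0..1} x + ennreal c * ennreal (indicator {1..} x * x powr e)"
          by simp
        finally show ?thesis .
      qed
    qed
  qed
  also have "\<dots> = ennreal c * emeasure lborel {0..1::real} + ennreal c * (\<integral>\<^sup>+x. ennreal (indicator {1..} x * x powr e) \<partial>lborel)"
  proof -
    have "(\<integral>\<^sup>+x. ennreal c * indicator {0..1} x + ennreal c * ennreal (indicator {1..} x * x powr e) \<partial>lborel)
       = (\<integral>\<^sup>+x. ennreal c * indicator {0..1::real} x \<partial>lborel) + (\<integral>\<^sup>+x. ennreal c * ennreal (indicator {1..} x * x powr e) \<partial>lborel)"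
      by (rule nn_integral_add) auto
    also have "(\<integral>\<^sup>+x. ennreal c * indicator {0..1::real} x \<partial>lborel) = ennreal c * emeasure lborel {0..1::real}"
      by (rule nn_integral_cmult_indicator) simp
    also have "(\<integral>\<^sup>+x. ennreal c * ennreal (indicator {1..} x * x powr e) \<partial>lborel)
       = ennreal c * (\<integral>\<^sup>+x. ennreal (indicator {1..} x * x powr e) \<partial>lborel)"
      by (rule nn_integral_cmult) simp
    finally show ?thesis .
  qed
  also have "\<dots> < \<infinity>" unfolding I2 by (simp add: ennreal_mult_less_top)
  finally show ?thesis .
qed


lemma finite_density: 
  fixes f :: "real \<Rightarrow> real"
  assumes "f \<in> borel_measurable borel" "(\<integral>\<^sup>+x. ennreal (f x) \<partial>lborel) < \<infinity>"
  shows "finite_measure (density lborel f)"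
  by (rule finite_measureI) (use assms in \<open>simp add: emeasure_density\<close>)

lemma finite_PiM_same:
  assumes "finite A" "finite_measure N"
  shows "finite_measure (PiM A (\<lambda>_. N))"
proof (rule finite_measureI)
  interpret N: finite_measure N by fact
  interpret product_sigma_finite "\<lambda>_. N" by standard
  have "emeasure (PiM A (\<lambda>_. N)) (space (PiM A (\<lambda>_. N))) = (\<Prod>i\<in>A. emeasure N (space N))"
    unfolding space_PiM by (rule emeasure_PiM) (use assms in auto)
  then show "emeasure (PiM A (\<lambda>_. N)) (space (PiM A (\<lambda>_. N))) \<noteq> \<infinity>"
    using N.emeasure_finite by (simp add: power_eq_top_ennreal)
qed

lemma hc_fin:
  assumes s: "s > 0"
  shows "(\<integral>\<^sup>+x. ennreal (half_cauchy_density s x) \<partial>lborel) < \<infinity>"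
proof -
  define c where "c = 2 / (pi * s) + 2 * s / pi"
  have m: "half_cauchy_density s \<in> borel_measurable borel"
    unfolding half_cauchy_density_def by measurable
  have nn: "0 \<le> half_cauchy_density s x" for x
    using s by (simp add: half_cauchy_density_def)
  have neg: "x \<le> 0 \<Longrightarrow> half_cauchy_density s x = 0" for x
    by (simp add: half_cauchy_density_def)
  have mid: "half_cauchy_density s x \<le> c" if "0 < x" "x \<le> 1" for x
  proof -
    have "half_cauchy_density s x = 2 / (pi * s * (1 + (x/s)^2))"
      using that by (simp add: half_cauchy_density_def)
    also have "\<dots> \<le> 2 / (pi * s * 1)"
      using s add_pos_nonneg[OF zero_less_one zero_le_power2[of "x/s"]] by (intro divide_left_mono mult_left_mono mult_pos_pos) auto
    also have "\<dots> \<le> c" using s unfolding c_def by simp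
    finally show ?thesis .
  qed
  have tail: "half_cauchy_density s x \<le> c * x powr (-2)" if "1 \<le> x" for x
  proof -
    have x0: "x > 0" using that by simp
    have "half_cauchy_density s x = 2 / (pi * s * (1 + (x/s)^2))"
      using x0 by (simp add: half_cauchy_density_def)
    also have "\<dots> \<le> 2 / (pi * s * ((x/s)^2))"
      using s x0 add_pos_nonneg[OF zero_less_one zero_le_power2[of "x/s"]] by (intro divide_left_mono mult_left_mono mult_pos_pos) auto
    also have "\<dots> = (2 * s / pi) * x powr (-2)"
      using s x0 by (simp add: powr_minus powr_realpow field_simps power2_eq_square)
    also have "\<dots> \<le> c * x powr (-2)"
      using s unfolding c_def by (intro mult_right_mono) auto
    finally show ?thesis .
  qed
  show ?thesis by (rule fin_majorant[OF m _ nn neg mid tail]) auto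
qed

lemma exp_poly_bound:
  fixes a b u :: real
  assumes a: "a > 0" and b: "b > 0" and u: "u \<ge> 1"
  shows "u powr (a+1) * exp (-(b*u)) \<le> (real (nat \<lceil>a+1\<rceil>) / b) ^ (nat \<lceil>a+1\<rceil>)"
proof -
  define k where "k = nat \<lceil>a+1\<rceil>"
  have k: "real k \<ge> a + 1" "k > 0" unfolding k_def using a by linarith+
  have "u powr (a+1) \<le> u powr (real k)" using u k by (intro powr_mono) auto
  also have "\<dots> = u ^ k" using u by (simp add: powr_realpow)
  finally have 1: "u powr (a+1) \<le> u ^ k" .
  have "(b*u/real k) ^ k \<le> (1 + b*u/real k) ^ k"
    using b u k by (intro power_mono) auto
  also have "\<dots> \<le> exp (b*u)"
  proof -
    have "b*u \<ge> 0" using b u by simp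
    then have "- real k \<le> b*u" by linarith
    then show ?thesis using exp_ge_one_plus_x_over_n_power_n[of k "b*u"] k by simp
  qed
  finally have 2: "(b/real k)^k * u^k \<le> exp (b*u)" by (simp add: power_mult_distrib field_simps)
  have "u powr (a+1) * exp (-(b*u)) \<le> u ^ k * exp (-(b*u))"
    using 1 by (intro mult_right_mono) auto
  also have "\<dots> = u ^ k / exp (b*u)" by (simp add: exp_minus field_simps)
  also have "\<dots> \<le> u ^ k / ((b/real k)^k * u^k)"
    using b u k 2 by (intro divide_left_mono mult_pos_pos) auto
  also have "\<dots> = (real k / b) ^ k" using b u k by (simp add: field_simps power_divide)
  finally show ?thesis unfolding k_def .
qed

lemma ig_fin:
  assumes a: "a > 0" and b: "b > 0"
  shows "(\<integral>\<^sup>+x. ennreal (inv_gamma_density a b x) \<partial>lborel) < \<infinity>"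
proof -
  define K0 where "K0 = b powr a / Gamma a"
  have K0: "K0 > 0" unfolding K0_def using a b by (simp add: Gamma_real_pos)
  define Bd where "Bd = (real (nat \<lceil>a+1\<rceil>) / b) ^ (nat \<lceil>a+1\<rceil>)"
  have Bd: "Bd \<ge> 0" unfolding Bd_def using b by simp
  show ?thesis
  proof (rule fin_majorant[where c = "K0 * Bd + K0" and e = "-a-1"])
    show "inv_gamma_density a b \<in> borel_measurable borel"
      unfolding inv_gamma_density_def by measurable
    show "0 \<le> inv_gamma_density a b x" for x
      using K0 unfolding inv_gamma_density_def K0_def[symmetric] by simp
    show "x \<le> 0 \<Longrightarrow> inv_gamma_density a b x = 0" for x
      by (simp add: inv_gamma_density_def)
    show "-a-1 < -1" using a by simp
    show "inv_gamma_density a b x \<le> K0 * Bd + K0" if "0 < x" "x \<le> 1" for x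
    proof -
      have u: "1/x \<ge> 1" using that by simp
      have "x powr (-a-1) = (1/x) powr (a+1)" using that
        by (simp add: powr_divide powr_minus_divide[symmetric] powr_minus)
      moreover have "exp (-b/x) = exp (-(b*(1/x)))" by simp
      ultimately have "x powr (-a-1) * exp (-b/x) \<le> Bd"
        using exp_poly_bound[OF a b u] unfolding Bd_def by simp
      then have "inv_gamma_density a b x \<le> K0 * Bd"
        using that K0 unfolding inv_gamma_density_def K0_def[symmetric]
        by (simp add: mult.assoc mult_left_mono)
      then show ?thesis using K0 by simp
    qed
    show "inv_gamma_density a b x \<le> (K0 * Bd + K0) * x powr (-a-1)" if "1 \<le> x" for x
    proof -
      have x0: "x > 0" using that by simp
      have "exp (-b/x) \<le> 1" using b x0 by simp
      then have "x powr (-a-1) * exp (-b/x) \<le> x powr (-a-1)"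
        by (intro mult_left_le) auto
      then have "inv_gamma_density a b x \<le> K0 * x powr (-a-1)"
        using x0 K0 unfolding inv_gamma_density_def K0_def[symmetric]
        by (simp add: mult.assoc mult_left_mono)
      also have "\<dots> \<le> (K0 * Bd + K0) * x powr (-a-1)"
        using K0 Bd by (intro mult_right_mono) auto
      finally show ?thesis .
    qed
  qed
qed

lemma hn_fin:
  assumes v: "v > 0"
  shows "(\<integral>\<^sup>+x. ennreal (half_normal_density v x) \<partial>lborel) < \<infinity>"
proof -
  have sv: "sqrt v > 0" using v by simp
  have "(\<integral>\<^sup>+x. ennreal (half_normal_density v x) \<partial>lborel)
      \<le> (\<integral>\<^sup>+x. 2 * ennreal (normal_density 0 (sqrt v) x) \<partial>lborel)"
    by (rule nn_integral_mono) (auto simp: half_normal_density_def ennreal_mult)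
  also have "\<dots> = 2 * (\<integral>\<^sup>+x. ennreal (normal_density 0 (sqrt v) x) \<partial>lborel)"
    by (rule nn_integral_cmult) simp
  also have "(\<integral>\<^sup>+x. ennreal (normal_density 0 (sqrt v) x) \<partial>lborel) = ennreal 1"
    using integral_normal_density[OF sv] integrable_normal_density[OF sv]
    by (subst nn_integral_eq_integral) auto
  finally have "(\<integral>\<^sup>+x. ennreal (half_normal_density v x) \<partial>lborel) \<le> 2" by simp
  then show ?thesis by (rule order.strict_trans1) simp
qed

lemma ghs_hyper_finite:
  assumes "finite A" "tau0 > 0" "ac > 0" "bc > 0" "sig_eta > 0"
  shows "finite_measure (ghs_hyper A tau0 ac bc sig_eta)"
  unfolding ghs_hyper_def
  using assms
  by (intro finite_measure_pair_measure finite_PiM_same finite_density hc_fin ig_fin hn_fin)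
     (auto simp: half_cauchy_density_def inv_gamma_density_def half_normal_density_def)


lemma jensen_exp_lower:
  fixes Pi :: "'a measure" and g :: "'a \<Rightarrow> real" and B :: "'a set"
  assumes fin: "finite_measure Pi" and B: "B \<in> sets Pi" and P: "measure Pi B > 0"
    and gm: "g \<in> borel_measurable Pi"
    and gup: "\<And>x. x \<in> space Pi \<Longrightarrow> g x \<le> U"
    and gB: "\<And>x. x \<in> B \<Longrightarrow> \<bar>g x\<bar> \<le> G"
  shows "(\<integral>x. exp (g x) \<partial>Pi) \<ge> measure Pi B * exp ((\<integral>x. indicator B x * g x \<partial>Pi) / measure Pi B)"
proof -
  interpret finite_measure Pi by fact
  define P where "P = measure Pi B"
  define m where "m = (\<integral>x. indicator B x * g x \<partial>Pi) / P"
  have Bm[measurable]: "B \<in> sets Pi" by fact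
  note gm[measurable]
  have Bne: "B \<noteq> {}" using P by auto
  have G0: "G \<ge> 0" using gB Bne by (meson abs_ge_zero all_not_in_conv order_trans)
  have int_exp: "integrable Pi (\<lambda>x. exp (g x))"
    by (rule integrable_const_bound[where B="exp U"]) (auto simp: gup)
  have int_ig: "integrable Pi (\<lambda>x. indicator B x * g x)"
    by (rule integrable_const_bound[where B="G"])
       (auto simp: gB indicator_def intro!: AE_I2 G0)
  have int_i: "integrable Pi (\<lambda>x. indicator B x :: real)"
    by (rule integrable_const_bound[where B="1"]) (auto simp: indicator_def)
  have int_rhs: "integrable Pi (\<lambda>x. exp m * (1 - m) * indicator B x + exp m * (indicator B x * g x))"
    using int_ig int_i by auto
  have "(\<integral>x. exp m * (1 - m) * indicator B x + exp m * (indicator B x * g x) \<partial>Pi) \<le> (\<integral>x. exp (g x) \<partial>Pi)"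
  proof (rule integral_mono[OF int_rhs int_exp])
    fix x assume "x \<in> space Pi"
    show "exp m * (1 - m) * indicator B x + exp m * (indicator B x * g x) \<le> exp (g x)"
    proof (cases "x \<in> B")
      case True
      have "exp m * (1 + (g x - m)) \<le> exp m * exp (g x - m)"
        by (intro mult_left_mono exp_ge_add_one_self) auto
      also have "\<dots> = exp (g x)" by (simp add: exp_diff)
      finally show ?thesis using True by (simp add: algebra_simps)
    qed simp
  qed
  also have "(\<integral>x. exp m * (1 - m) * indicator B x + exp m * (indicator B x * g x) \<partial>Pi)
      = exp m * (1 - m) * P + exp m * (m * P)"
    using int_ig int_i P unfolding P_def m_def by (simp add: Int_absorb2[OF sets.sets_into_space[OF B]])
  also have "\<dots> = P * exp m" by (simp add: algebra_simps)
  finally show ?thesis unfolding P_def m_def by simp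
qed

lemma var_ineq:
  fixes Pi :: "'a measure" and h :: "'a \<Rightarrow> real"
  assumes fin: "finite_measure Pi" and B: "B \<in> sets Pi" and P: "measure Pi B > 0"
    and hm: "h \<in> borel_measurable Pi" and hB: "\<And>x. x \<in> B \<Longrightarrow> \<bar>h x\<bar> \<le> H"
  shows "((\<integral>x. indicator B x * h x \<partial>Pi) / measure Pi B)\<^sup>2 \<le> (\<integral>x. indicator B x * (h x)\<^sup>2 \<partial>Pi) / measure Pi B"
proof -
  interpret finite_measure Pi by fact
  define P where "P = measure Pi B"
  define v where "v = (\<integral>x. indicator B x * h x \<partial>Pi) / P"
  have Bm[measurable]: "B \<in> sets Pi" by fact
  note hm[measurable]
  have Bne: "B \<noteq> {}" using P by auto
  have H0: "H \<ge> 0" using hB Bne by (meson abs_ge_zero all_not_in_conv order_trans)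
  have int_h: "integrable Pi (\<lambda>x. indicator B x * h x)"
    by (rule integrable_const_bound[where B="H"]) (auto simp: hB indicator_def intro!: AE_I2 H0)
  have int_h2: "integrable Pi (\<lambda>x. indicator B x * (h x)\<^sup>2)"
  proof (rule integrable_const_bound[where B="H\<^sup>2"])
    show "AE x in Pi. norm (indicator B x * (h x)\<^sup>2) \<le> H\<^sup>2"
    proof (rule AE_I2)
      fix x show "norm (indicator B x * (h x)\<^sup>2) \<le> H\<^sup>2"
        using hB[of x] H0 by (cases "x \<in> B") (auto simp: abs_le_square_iff power2_le_iff_abs_le)
    qed
  qed simp
  have int_i: "integrable Pi (\<lambda>x. indicator B x :: real)"
    by (rule integrable_const_bound[where B="1"]) (auto simp: indicator_def)
  have "0 \<le> (\<integral>x. indicator B x * (h x - v)\<^sup>2 \<partial>Pi)"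
    by (intro integral_nonneg_AE AE_I2) (auto simp: indicator_def)
  also have "(\<integral>x. indicator B x * (h x - v)\<^sup>2 \<partial>Pi)
     = (\<integral>x. indicator B x * (h x)\<^sup>2 + (- 2 * v) * (indicator B x * h x) + v\<^sup>2 * indicator B x \<partial>Pi)"
    by (rule Bochner_Integration.integral_cong) (auto simp: power2_eq_square algebra_simps)
  also have "\<dots> = (\<integral>x. indicator B x * (h x)\<^sup>2 \<partial>Pi) - 2 * v * (v * P) + v\<^sup>2 * P"
    using int_h int_h2 int_i P unfolding v_def P_def
    by (simp add: Int_absorb2[OF sets.sets_into_space[OF B]])
  finally have "v\<^sup>2 * P \<le> (\<integral>x. indicator B x * (h x)\<^sup>2 \<partial>Pi)" by (simp add: power2_eq_square algebra_simps)
  then show ?thesis using P unfolding v_def[symmetric] P_def[symmetric] by (simp add: field_simps)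
qed

lemma core:
  fixes Pi :: "'a measure" and r :: "nat \<Rightarrow> 'a \<Rightarrow> real" and eps :: "nat \<Rightarrow> real"
  assumes fin: "finite_measure Pi" and B: "B \<in> sets Pi" and P: "measure Pi B > 0"
    and rm: "\<And>i. r i \<in> borel_measurable Pi"
    and rB: "\<And>x. x \<in> B \<Longrightarrow> (\<Sum>i<n. (r i x)\<^sup>2) \<le> R"
    and \<sigma>: "\<sigma> > 0"
  shows "(\<Sum>i<n. ((\<integral>x. indicator B x * r i x \<partial>Pi) / measure Pi B)\<^sup>2) \<le> R"
    and "(\<integral>x. exp (\<Sum>i<n. (2 * eps i * r i x - (r i x)\<^sup>2) / (2*\<sigma>\<^sup>2)) \<partial>Pi)
          \<ge> measure Pi B * exp ((\<Sum>i<n. eps i * ((\<integral>x. indicator B x * r i x \<partial>Pi) / measure Pi B)) / \<sigma>\<^sup>2 - R / (2*\<sigma>\<^sup>2))"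
proof -
  interpret finite_measure Pi by fact
  define P where "P = measure Pi B"
  define v where "v = (\<lambda>i. (\<integral>x. indicator B x * r i x \<partial>Pi) / P)"
  have P0: "P > 0" unfolding P_def by fact
  have Bm[measurable]: "B \<in> sets Pi" by fact
  note rm[measurable]
  have Bne: "B \<noteq> {}" using P by auto
  then obtain x0 where "x0 \<in> B" by auto
  have R0: "R \<ge> 0" using rB[OF \<open>x0 \<in> B\<close>] by (meson order_trans sum_nonneg zero_le_power2)
  have ri_le: "(r i x)\<^sup>2 \<le> R" if "x \<in> B" "i < n" for i x
  proof -
    have "(r i x)\<^sup>2 \<le> (\<Sum>i<n. (r i x)\<^sup>2)"
      by (rule member_le_sum) (use that in auto)
    then show ?thesis using rB[OF that(1)] by simp
  qed
  have ri_abs: "\<bar>r i x\<bar> \<le> sqrt R" if "x \<in> B" "i < n" for i x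
    using ri_le[OF that] by (simp add: real_le_rsqrt)
  have int_r: "integrable Pi (\<lambda>x. indicator B x * r i x)" if "i < n" for i
    by (rule integrable_const_bound[where B="sqrt R"])
       (use ri_abs that R0 in \<open>auto simp: indicator_def intro!: AE_I2\<close>)
  have int_r2: "integrable Pi (\<lambda>x. indicator B x * (r i x)\<^sup>2)" if "i < n" for i
    by (rule integrable_const_bound[where B="R"])
       (use ri_le that R0 in \<open>auto simp: indicator_def intro!: AE_I2\<close>)
  define S2 where "S2 = (\<Sum>i<n. \<integral>x. indicator B x * (r i x)\<^sup>2 \<partial>Pi)"
  have S2eq: "S2 = (\<integral>x. indicator B x * (\<Sum>i<n. (r i x)\<^sup>2) \<partial>Pi)"
    unfolding S2_def sum_distrib_left
    by (subst Bochner_Integration.integral_sum) (use int_r2 in auto)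
  have int_R: "integrable Pi (\<lambda>x. indicator B x * R)"
    by (rule integrable_const_bound[where B="R"]) (use R0 in \<open>auto simp: indicator_def intro!: AE_I2\<close>)
  have "S2 \<le> (\<integral>x. indicator B x * R \<partial>Pi)"
    unfolding S2eq
  proof (rule integral_mono[OF _ int_R])
    show "integrable Pi (\<lambda>x. indicator B x * (\<Sum>i<n. (r i x)\<^sup>2))"
      unfolding sum_distrib_left by (rule Bochner_Integration.integrable_sum) (use int_r2 in auto)
    show "indicator B x * (\<Sum>i<n. (r i x)\<^sup>2) \<le> indicator B x * R" for x
      using rB[of x] by (auto simp: indicator_def)
  qed
  also have "(\<integral>x. indicator B x * R \<partial>Pi) = R * P"
    unfolding P_def by (simp add: Int_absorb2[OF sets.sets_into_space[OF B]])
  finally have S2le: "S2 \<le> R * P" .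
  have vi: "(v i)\<^sup>2 \<le> (\<integral>x. indicator B x * (r i x)\<^sup>2 \<partial>Pi) / P" if "i < n" for i
    unfolding v_def P_def
    by (rule var_ineq[OF fin B P rm]) (use ri_abs that in auto)
  have "(\<Sum>i<n. (v i)\<^sup>2) \<le> (\<Sum>i<n. (\<integral>x. indicator B x * (r i x)\<^sup>2 \<partial>Pi) / P)"
    by (rule sum_mono) (use vi in auto)
  also have "\<dots> = S2 / P" unfolding S2_def by (simp add: sum_divide_distrib)
  also have "\<dots> \<le> R" using S2le P0 by (simp add: field_simps)
  finally show "(\<Sum>i<n. ((\<integral>x. indicator B x * r i x \<partial>Pi) / measure Pi B)\<^sup>2) \<le> R"
    unfolding v_def P_def .
  define g where "g = (\<lambda>x. \<Sum>i<n. (2 * eps i * r i x - (r i x)\<^sup>2) / (2*\<sigma>\<^sup>2))"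
  have gm: "g \<in> borel_measurable Pi" unfolding g_def by measurable
  have gup: "g x \<le> (\<Sum>i<n. (eps i)\<^sup>2 / (2*\<sigma>\<^sup>2))" for x
    unfolding g_def
  proof (rule sum_mono)
    fix i
    have "2 * eps i * r i x - (r i x)\<^sup>2 \<le> (eps i)\<^sup>2"
      using zero_le_power2[of "eps i - r i x"] by (simp add: power2_diff)
    then show "(2 * eps i * r i x - (r i x)\<^sup>2) / (2*\<sigma>\<^sup>2) \<le> (eps i)\<^sup>2 / (2*\<sigma>\<^sup>2)"
      using \<sigma> by (intro divide_right_mono) auto
  qed
  have gB: "\<bar>g x\<bar> \<le> ((\<Sum>i<n. (eps i)\<^sup>2) + 2 * R) / (2*\<sigma>\<^sup>2)" if "x \<in> B" for x
  proof -
    have "\<bar>g x\<bar> \<le> (\<Sum>i<n. \<bar>(2 * eps i * r i x - (r i x)\<^sup>2) / (2*\<sigma>\<^sup>2)\<bar>)"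
      unfolding g_def by (rule sum_abs)
    also have "\<dots> \<le> (\<Sum>i<n. ((eps i)\<^sup>2 + 2 * (r i x)\<^sup>2) / (2*\<sigma>\<^sup>2))"
    proof (rule sum_mono)
      fix i
      have a: "2 * eps i * r i x \<le> (eps i)\<^sup>2 + (r i x)\<^sup>2"
        using zero_le_power2[of "eps i - r i x"] by (simp add: power2_diff)
      have b: "- (2 * eps i * r i x) \<le> (eps i)\<^sup>2 + (r i x)\<^sup>2"
        using zero_le_power2[of "eps i + r i x"] by (simp add: power2_sum)
      have "\<bar>2 * eps i * r i x - (r i x)\<^sup>2\<bar> \<le> (eps i)\<^sup>2 + 2 * (r i x)\<^sup>2"
        unfolding abs_le_iff using a b zero_le_power2[of "r i x"] by linarith
      then show "\<bar>(2 * eps i * r i x - (r i x)\<^sup>2) / (2*\<sigma>\<^sup>2)\<bar> \<le> ((eps i)\<^sup>2 + 2 * (r i x)\<^sup>2) / (2*\<sigma>\<^sup>2)"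
        using \<sigma> by (simp add: abs_div divide_right_mono)
    qed
    also have "\<dots> = ((\<Sum>i<n. (eps i)\<^sup>2) + 2 * (\<Sum>i<n. (r i x)\<^sup>2)) / (2*\<sigma>\<^sup>2)"
      by (simp add: sum_divide_distrib[symmetric] sum.distrib sum_distrib_left)
    also have "\<dots> \<le> ((\<Sum>i<n. (eps i)\<^sup>2) + 2 * R) / (2*\<sigma>\<^sup>2)"
      using rB[OF that] \<sigma> by (intro divide_right_mono) auto
    finally show ?thesis .
  qed
  have J: "(\<integral>x. exp (g x) \<partial>Pi) \<ge> P * exp ((\<integral>x. indicator B x * g x \<partial>Pi) / P)"
    unfolding P_def by (rule jensen_exp_lower[OF fin B P gm gup gB])
  have pw: "indicator B x * g x = (\<Sum>i<n. (eps i / \<sigma>\<^sup>2) * (indicator B x * r i x))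
        - (1 / (2*\<sigma>\<^sup>2)) * (\<Sum>i<n. indicator B x * (r i x)\<^sup>2)" for x
  proof -
    have "indicator B x * g x = (\<Sum>i<n. (eps i / \<sigma>\<^sup>2) * (indicator B x * r i x)
         - (1 / (2*\<sigma>\<^sup>2)) * (indicator B x * (r i x)\<^sup>2))"
      unfolding g_def sum_distrib_left
      by (rule sum.cong) (use \<sigma> in \<open>auto simp: field_simps\<close>)
    then show ?thesis by (simp only: sum_subtractf sum_distrib_left)
  qed
  have int_a: "integrable Pi (\<lambda>x. \<Sum>i<n. (eps i / \<sigma>\<^sup>2) * (indicator B x * r i x))"
    by (intro Bochner_Integration.integrable_sum integrable_mult_right int_r) auto
  have int_b: "integrable Pi (\<lambda>x. (1 / (2*\<sigma>\<^sup>2)) * (\<Sum>i<n. indicator B x * (r i x)\<^sup>2))"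
    by (intro Bochner_Integration.integrable_sum integrable_mult_right int_r2) auto
  have "(\<integral>x. indicator B x * g x \<partial>Pi)
      = (\<integral>x. (\<Sum>i<n. (eps i / \<sigma>\<^sup>2) * (indicator B x * r i x)) \<partial>Pi)
        - (\<integral>x. (1 / (2*\<sigma>\<^sup>2)) * (\<Sum>i<n. indicator B x * (r i x)\<^sup>2) \<partial>Pi)"
    unfolding pw by (rule Bochner_Integration.integral_diff[OF int_a int_b])
  also have "(\<integral>x. (\<Sum>i<n. (eps i / \<sigma>\<^sup>2) * (indicator B x * r i x)) \<partial>Pi)
      = (\<Sum>i<n. (eps i / \<sigma>\<^sup>2) * (P * v i))"
    by (subst Bochner_Integration.integral_sum) (use int_r P0 in \<open>auto simp: v_def\<close>)
  also have "(\<integral>x. (1 / (2*\<sigma>\<^sup>2)) * (\<Sum>i<n. indicator B x * (r i x)\<^sup>2) \<partial>Pi) = S2 / (2*\<sigma>\<^sup>2)"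
    unfolding S2_def integral_mult_right_zero by (subst Bochner_Integration.integral_sum) (use int_r2 in auto)
  finally have Ig: "(\<integral>x. indicator B x * g x \<partial>Pi) = P * ((\<Sum>i<n. eps i * v i) / \<sigma>\<^sup>2) - S2 / (2*\<sigma>\<^sup>2)"
    by (simp add: sum_distrib_left sum_divide_distrib algebra_simps)
  have "(\<Sum>i<n. eps i * v i) / \<sigma>\<^sup>2 - R / (2*\<sigma>\<^sup>2) \<le> (\<integral>x. indicator B x * g x \<partial>Pi) / P"
  proof -
    have "S2 / (2*\<sigma>\<^sup>2) / P \<le> R / (2*\<sigma>\<^sup>2)"
      using S2le P0 \<sigma> by (simp add: field_simps)
    moreover have "(P * ((\<Sum>i<n. eps i * v i) / \<sigma>\<^sup>2) - S2 / (2*\<sigma>\<^sup>2)) / P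
        = (\<Sum>i<n. eps i * v i) / \<sigma>\<^sup>2 - S2 / (2*\<sigma>\<^sup>2) / P"
      using P0 by (simp add: diff_divide_distrib)
    ultimately show ?thesis unfolding Ig by linarith
  qed
  then have "P * exp ((\<Sum>i<n. eps i * v i) / \<sigma>\<^sup>2 - R / (2*\<sigma>\<^sup>2)) \<le> P * exp ((\<integral>x. indicator B x * g x \<partial>Pi) / P)"
    using P0 by (intro mult_left_mono) auto
  also note J
  finally show "(\<integral>x. exp (\<Sum>i<n. (2 * eps i * r i x - (r i x)\<^sup>2) / (2*\<sigma>\<^sup>2)) \<partial>Pi)
          \<ge> measure Pi B * exp ((\<Sum>i<n. eps i * ((\<integral>x. indicator B x * r i x \<partial>Pi) / measure Pi B)) / \<sigma>\<^sup>2 - R / (2*\<sigma>\<^sup>2))"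
    unfolding g_def v_def P_def .
qed


lemma hyper_space_ne: "space (ghs_hyper A tau0 ac bc sig_eta) \<noteq> {}"
proof -
  have "(restrict (\<lambda>_. 0) A, 0, 0, 0) \<in> space (ghs_hyper A tau0 ac bc sig_eta)"
    unfolding ghs_hyper_def by (simp add: space_pair_measure space_PiM)
  then show ?thesis by auto
qed

lemma prior_sets:
  "sets (ghs_prior sigma0 tau0 ac bc sig_eta z A) = sets (PiM A (\<lambda>_. lborel))"
  unfolding ghs_prior_def
proof (rule sets_bind[OF _ hyper_space_ne])
  fix x assume "x \<in> space (ghs_hyper A tau0 ac bc sig_eta)"
  obtain lam tau c2 eta where x: "x = (lam, tau, c2, eta)" by (cases x) auto
  show "sets (case x of (lam, tau, c2, eta) \<Rightarrow> PiM A (\<lambda>j. density lborel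
                   (normal_density 0 (sigma0 * sqrt (kappa2 (z j) (lam j) tau c2 eta))))) = sets (PiM A (\<lambda>_. lborel))"
    unfolding x by (auto intro!: sets_PiM_cong)
qed

lemma prior_finite:
  assumes "finite A" "tau0 > 0" "ac > 0" "bc > 0" "sig_eta > 0"
  shows "finite_measure (ghs_prior sigma0 tau0 ac bc sig_eta z A)"
proof (rule finite_measureI)
  interpret H: finite_measure "ghs_hyper A tau0 ac bc sig_eta"
    by (rule ghs_hyper_finite) (use assms in auto)
  have "emeasure (ghs_prior sigma0 tau0 ac bc sig_eta z A) (space (ghs_prior sigma0 tau0 ac bc sig_eta z A))
      \<le> emeasure (ghs_hyper A tau0 ac bc sig_eta) (space (ghs_hyper A tau0 ac bc sig_eta))"
    unfolding ghs_prior_def by (rule emeasure_bind_le)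
  also have "\<dots> < \<infinity>" using H.emeasure_finite[of "space (ghs_hyper A tau0 ac bc sig_eta)"] by (simp add: less_top[symmetric])
  finally show "emeasure (ghs_prior sigma0 tau0 ac bc sig_eta z A) (space (ghs_prior sigma0 tau0 ac bc sig_eta z A)) \<noteq> \<infinity>"
    by simp
qed

lemma ext_coef_meas:
  "(\<lambda>b. ext_coef A b j) \<in> borel_measurable (PiM A (\<lambda>_. lborel))"
proof (cases "j \<in> A")
  case True
  have "(\<lambda>b. b j) \<in> measurable (PiM A (\<lambda>_. lborel)) lborel"
    by (rule measurable_component_singleton) fact
  then show ?thesis using True by (simp add: ext_coef_def measurable_cong_sets[OF refl sets_lborel])
next
  case False
  then show ?thesis by (simp add: ext_coef_def)
qed

lemma ext_coef_meas_prior: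
  "(\<lambda>b. ext_coef A b j) \<in> borel_measurable (ghs_prior sigma0 tau0 ac bc sig_eta z A)"
  using ext_coef_meas by (subst measurable_cong_sets[OF prior_sets refl])

lemma nd_ratio:
  assumes "\<sigma> > 0"
  shows "normal_density (a + d) \<sigma> y / normal_density a \<sigma> y = exp ((2 * (y - a) * d - d\<^sup>2) / (2 * \<sigma>\<^sup>2))"
proof -
  have "normal_density (a + d) \<sigma> y / normal_density a \<sigma> y
      = exp (-(y - (a + d))\<^sup>2 / (2 * \<sigma>\<^sup>2)) / exp (-(y - a)\<^sup>2 / (2 * \<sigma>\<^sup>2))"
    using assms by (simp add: normal_density_def)
  also have "\<dots> = exp (-(y - (a + d))\<^sup>2 / (2 * \<sigma>\<^sup>2) - (-(y - a)\<^sup>2 / (2 * \<sigma>\<^sup>2)))"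
    by (rule exp_diff[symmetric])
  also have "-(y - (a + d))\<^sup>2 / (2 * \<sigma>\<^sup>2) - (-(y - a)\<^sup>2 / (2 * \<sigma>\<^sup>2)) = (2 * (y - a) * d - d\<^sup>2) / (2 * \<sigma>\<^sup>2)"
    using assms by (simp add: field_simps power2_eq_square)
  finally show ?thesis .
qed

lemma lik_ratio:
  assumes "\<sigma> > 0"
  shows "lik n p X \<sigma> b y / lik n p X \<sigma> b0 y
     = exp (\<Sum>i<n. (2 * (y i - matvec p X b0 i) * matvec p X (\<lambda>j. b j - b0 j) i
                      - (matvec p X (\<lambda>j. b j - b0 j) i)\<^sup>2) / (2 * \<sigma>\<^sup>2))"
proof -
  have mv: "matvec p X b i = matvec p X b0 i + matvec p X (\<lambda>j. b j - b0 j) i" for i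
    unfolding matvec_def by (simp add: sum_subtractf[symmetric] sum.distrib[symmetric] algebra_simps)
  have "lik n p X \<sigma> b y / lik n p X \<sigma> b0 y
      = (\<Prod>i<n. normal_density (matvec p X b i) \<sigma> (y i) / normal_density (matvec p X b0 i) \<sigma> (y i))"
    unfolding lik_def by (rule prod_dividef[symmetric])
  also have "\<dots> = (\<Prod>i<n. exp ((2 * (y i - matvec p X b0 i) * matvec p X (\<lambda>j. b j - b0 j) i
                      - (matvec p X (\<lambda>j. b j - b0 j) i)\<^sup>2) / (2 * \<sigma>\<^sup>2)))"
    by (rule prod.cong[OF refl]) (simp only: mv nd_ratio[OF assms])
  also have "\<dots> = exp (\<Sum>i<n. (2 * (y i - matvec p X b0 i) * matvec p X (\<lambda>j. b j - b0 j) i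
                      - (matvec p X (\<lambda>j. b j - b0 j) i)\<^sup>2) / (2 * \<sigma>\<^sup>2))"
    by (rule exp_sum[symmetric]) simp
  finally show ?thesis .
qed


lemma per_nA:
  fixes Pi :: "(nat \<Rightarrow> real) measure" and X :: "nat \<Rightarrow> nat \<Rightarrow> real" and b0 :: "nat \<Rightarrow> real"
  assumes fin: "finite_measure Pi" and sets: "sets Pi = sets (PiM A (\<lambda>_. lborel))"
    and B_def: "B = {b \<in> space Pi. l2norm p (\<lambda>j. ext_coef A b j - b0 j) \<le> sqrt e2}"
    and Ppos: "measure Pi B > 0"
    and op: "op_norm n p X \<le> K * sqrt (real n)" and e2: "e2 \<ge> 0" and \<sigma>: "\<sigma> > 0"
  defines "r \<equiv> (\<lambda>i b. matvec p X (\<lambda>j. ext_coef A b j - b0 j) i)"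
  defines "v \<equiv> (\<lambda>i. (\<integral>b. indicator B b * r i b \<partial>Pi) / measure Pi B)"
  shows "(\<Sum>i<n. (v i)\<^sup>2) \<le> K\<^sup>2 * real n * e2"
    and "(\<integral>b. lik n p X \<sigma> (ext_coef A b) y / lik n p X \<sigma> b0 y \<partial>Pi)
         \<ge> measure Pi B * exp ((\<Sum>i<n. (y i - matvec p X b0 i) * v i) / \<sigma>\<^sup>2 - K\<^sup>2 * real n * e2 / (2*\<sigma>\<^sup>2))"
proof -
  have Bsets: "B \<in> sets Pi"
  proof (rule ccontr)
    assume "B \<notin> sets Pi"
    then have "measure Pi B = 0" by (rule measure_notin_sets)
    then show False using Ppos by simp
  qed
  have rm: "r i \<in> borel_measurable Pi" for i
  proof -
    have "(\<lambda>b. ext_coef A b j) \<in> borel_measurable Pi" for j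
      using ext_coef_meas[of A j] by (subst measurable_cong_sets[OF sets refl])
    then show ?thesis unfolding r_def matvec_def by measurable
  qed
  have rB: "(\<Sum>i<n. (r i b)\<^sup>2) \<le> K\<^sup>2 * real n * e2" if "b \<in> B" for b
  proof -
    define D where "D = (\<lambda>j. ext_coef A b j - b0 j)"
    have lD: "l2norm p D \<le> sqrt e2" using that unfolding B_def D_def by simp
    have o0: "op_norm n p X \<ge> 0" by (rule op_norm_props(1))
    have "l2norm n (matvec p X D) \<le> op_norm n p X * l2norm p D" by (rule op_norm_props(2))
    also have "\<dots> \<le> (K * sqrt (real n)) * sqrt e2"
      using op o0 lD l2norm_nonneg[of p D] by (intro mult_mono) auto
    finally have le: "l2norm n (matvec p X D) \<le> K * sqrt (real n) * sqrt e2" .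
    have "(\<Sum>i<n. (r i b)\<^sup>2) = (l2norm n (matvec p X D))\<^sup>2"
      unfolding l2norm_def r_def D_def by (simp add: sum_nonneg)
    also have "\<dots> \<le> (K * sqrt (real n) * sqrt e2)\<^sup>2"
      using le l2norm_nonneg[of n "matvec p X D"] by (intro power_mono) auto
    also have "\<dots> = K\<^sup>2 * real n * e2" using e2 by (simp add: power_mult_distrib)
    finally show ?thesis .
  qed
  show "(\<Sum>i<n. (v i)\<^sup>2) \<le> K\<^sup>2 * real n * e2"
    unfolding v_def by (rule core(1)[OF fin Bsets Ppos rm rB \<sigma>])
  have eq: "lik n p X \<sigma> (ext_coef A b) y / lik n p X \<sigma> b0 y
      = exp (\<Sum>i<n. (2 * (y i - matvec p X b0 i) * r i b - (r i b)\<^sup>2) / (2 * \<sigma>\<^sup>2))" for b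
    unfolding r_def by (rule lik_ratio[OF \<sigma>])
  have "(\<integral>b. exp (\<Sum>i<n. (2 * (y i - matvec p X b0 i) * r i b - (r i b)\<^sup>2) / (2*\<sigma>\<^sup>2)) \<partial>Pi)
        \<ge> measure Pi B * exp ((\<Sum>i<n. (y i - matvec p X b0 i) * v i) / \<sigma>\<^sup>2 - K\<^sup>2 * real n * e2 / (2*\<sigma>\<^sup>2))"
    unfolding v_def by (rule core(2)[OF fin Bsets Ppos rm rB \<sigma>])
  then show "(\<integral>b. lik n p X \<sigma> (ext_coef A b) y / lik n p X \<sigma> b0 y \<partial>Pi)
         \<ge> measure Pi B * exp ((\<Sum>i<n. (y i - matvec p X b0 i) * v i) / \<sigma>\<^sup>2 - K\<^sup>2 * real n * e2 / (2*\<sigma>\<^sup>2))"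
    unfolding eq by (simp add: power2_eq_square)
qed


lemma lin_meas:
  fixes c w :: "nat \<Rightarrow> real" and f :: "nat \<Rightarrow> real \<Rightarrow> real"
  shows "(\<lambda>y. \<Sum>i<n. (y i - c i) * w i) \<in> borel_measurable (PiM {..<n} (\<lambda>i. density lborel (f i)))"
proof (rule borel_measurable_sum)
  fix i assume i: "i \<in> {..<n}"
  have "(\<lambda>y. y i) \<in> measurable (PiM {..<n} (\<lambda>i. density lborel (f i))) (density lborel (f i))"
    by (rule measurable_component_singleton) (use i in auto)
  then have comp[measurable]: "(\<lambda>y. y i) \<in> borel_measurable (PiM {..<n} (\<lambda>i. density lborel (f i)))"
    by (subst (asm) measurable_cong_sets[OF refl sets_density]) simp
  show "(\<lambda>y. (y i - c i) * w i) \<in> borel_measurable (PiM {..<n} (\<lambda>i. density lborel (f i)))"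
    by measurable
qed

theorem lemma2:
  fixes p :: "nat \<Rightarrow> nat"
    and X :: "nat \<Rightarrow> nat \<Rightarrow> nat \<Rightarrow> real"
    and b0 :: "nat \<Rightarrow> nat \<Rightarrow> real"
    and z :: "nat \<Rightarrow> nat \<Rightarrow> real"
    and L :: "nat \<Rightarrow> real"
    and sigma0 tau0 ac bc sig_eta C :: real
    and s0 m eps2 :: "nat \<Rightarrow> real"
  defines "s0 \<equiv> (\<lambda>n. real (card (support (p n) (b0 n))))"
    and "m \<equiv> (\<lambda>n. C * s0 n * L n)"
    and "eps2 \<equiv> (\<lambda>n. s0 n * ln (m n) / real n)"
  assumes sigma0_pos: "sigma0 > 0"
    and hyper_pos: "tau0 > 0" "ac > 0" "bc > 0" "sig_eta > 0"
    and C_pos: "C > 0"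
    and L_pos: "\<And>n. L n > 0"
    and L_polylog: "\<exists>k::nat. \<exists>K. \<forall>\<^sub>F n in sequentially. L n \<le> K * (ln (real (p n))) ^ k"
    and A1a: "(\<lambda>n. s0 n * ln (real (p n)) / real n) \<longlonglongrightarrow> 0"
    and A1b: "filterlim (\<lambda>n. s0 n * ln (real (p n))) at_top sequentially"
    and A11: "\<exists>K. \<forall>\<^sub>F n in sequentially. op_norm n (p n) (X n) \<le> K * sqrt (real n)"
    and eps_div: "filterlim (\<lambda>n. s0 n * ln (m n)) at_top sequentially"
    and prior_conc: "\<exists>C1>0. \<forall>\<^sub>F n in sequentially.
        \<forall>A \<in> model_class (p n) (support (p n) (b0 n)) (m n).
          measure (ghs_prior sigma0 tau0 ac bc sig_eta (z n) A)
            {b \<in> space (ghs_prior sigma0 tau0 ac bc sig_eta (z n) A).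
               l2norm (p n) (\<lambda>j. ext_coef A b j - b0 n j) \<le> sqrt (eps2 n)}
          \<ge> exp (- C1 * real n * eps2 n)"
  shows "\<exists>CD>0. \<forall>\<delta>>0. \<exists>\<Omega> :: nat \<Rightarrow> nat set \<Rightarrow> (nat \<Rightarrow> real) set.
           (\<forall>n A. \<Omega> n A \<in> sets (data_law n (p n) (X n) sigma0 (b0 n)))
         \<and> (\<forall>e>0. \<forall>\<^sub>F n in sequentially.
              \<forall>A \<in> model_class (p n) (support (p n) (b0 n)) (m n).
                measure (data_law n (p n) (X n) sigma0 (b0 n))
                  (space (data_law n (p n) (X n) sigma0 (b0 n)) - \<Omega> n A) \<le> e)
         \<and> (\<forall>n. \<forall>A \<in> model_class (p n) (support (p n) (b0 n)) (m n). \<forall>y \<in> \<Omega> n A.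
              Dn n (p n) (X n) sigma0 (b0 n) (ghs_prior sigma0 tau0 ac bc sig_eta (z n) A) A y
                \<ge> exp (- (CD + \<delta>) * real n * eps2 n))"
proof -
  from prior_conc obtain C1 where C1: "C1 > 0" and PC: "\<forall>\<^sub>F n in sequentially.
        \<forall>A \<in> model_class (p n) (support (p n) (b0 n)) (m n).
          measure (ghs_prior sigma0 tau0 ac bc sig_eta (z n) A)
            {b \<in> space (ghs_prior sigma0 tau0 ac bc sig_eta (z n) A).
               l2norm (p n) (\<lambda>j. ext_coef A b j - b0 n j) \<le> sqrt (eps2 n)}
          \<ge> exp (- C1 * real n * eps2 n)" by blast
  from A11 obtain K where KA: "\<forall>\<^sub>F n in sequentially. op_norm n (p n) (X n) \<le> K * sqrt (real n)" by blast
  define CD where "CD = C1 + K\<^sup>2 / (2 * sigma0\<^sup>2)"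
  have CD0: "CD > 0" using C1 sigma0_pos unfolding CD_def by (simp add: add_pos_nonneg)
  define Pi where "Pi = (\<lambda>n A. ghs_prior sigma0 tau0 ac bc sig_eta (z n) A)"
  define B where "B = (\<lambda>n A. {b \<in> space (Pi n A). l2norm (p n) (\<lambda>j. ext_coef A b j - b0 n j) \<le> sqrt (eps2 n)})"
  define v where "v = (\<lambda>n A i. (\<integral>b. indicator (B n A) b * matvec (p n) (X n) (\<lambda>j. ext_coef A b j - b0 n j) i \<partial>Pi n A)
                        / measure (Pi n A) (B n A))"
  define mu where "mu = (\<lambda>n i. matvec (p n) (X n) (b0 n) i)"
  define good where "good = (\<lambda>n. (\<forall>A \<in> model_class (p n) (support (p n) (b0 n)) (m n).
          measure (Pi n A) (B n A) \<ge> exp (- C1 * real n * eps2 n))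
        \<and> op_norm n (p n) (X n) \<le> K * sqrt (real n) \<and> n > 0 \<and> s0 n * ln (m n) > 0)"
  have ev_pos: "\<forall>\<^sub>F n in sequentially. s0 n * ln (m n) > 0"
    using eps_div unfolding filterlim_at_top_dense by blast
  have ev_good: "eventually good sequentially"
    using PC KA ev_pos eventually_gt_at_top[of 0]
    unfolding good_def Pi_def B_def by eventually_elim auto
  have DL: "data_law n (p n) (X n) sigma0 (b0 n) = PiM {..<n} (\<lambda>i. density lborel (normal_density (mu n i) sigma0))" for n
    by (simp add: data_law_def mu_def)
  have neps: "real n * eps2 n = s0 n * ln (m n)" if "n > 0" for n
    using that by (simp add: eps2_def)
  have key: "(\<Sum>i<n. (v n A i)\<^sup>2) \<le> K\<^sup>2 * real n * eps2 n
     \<and> (\<forall>y. (\<integral>b. lik n (p n) (X n) sigma0 (ext_coef A b) y / lik n (p n) (X n) sigma0 (b0 n) y \<partial>Pi n A)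
         \<ge> measure (Pi n A) (B n A) * exp ((\<Sum>i<n. (y i - mu n i) * v n A i) / sigma0\<^sup>2
              - K\<^sup>2 * real n * eps2 n / (2 * sigma0\<^sup>2)))"
    if g: "good n" and A: "A \<in> model_class (p n) (support (p n) (b0 n)) (m n)" for n A
  proof -
    have fA: "finite A" using A unfolding model_class_def by (auto intro: finite_subset)
    have fin: "finite_measure (Pi n A)" unfolding Pi_def
      by (rule prior_finite) (use fA hyper_pos in auto)
    have sets: "sets (Pi n A) = sets (PiM A (\<lambda>_. lborel))" unfolding Pi_def by (rule prior_sets)
    have Ppos: "measure (Pi n A) (B n A) > 0"
      using g A unfolding good_def by (meson exp_gt_zero less_le_trans)
    have op: "op_norm n (p n) (X n) \<le> K * sqrt (real n)" using g unfolding good_def by simp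
    have e2: "eps2 n \<ge> 0" using g neps[of n] unfolding good_def
      by (simp add: eps2_def divide_nonneg_pos)
    have Beq: "B n A = {b \<in> space (Pi n A). l2norm (p n) (\<lambda>j. ext_coef A b j - b0 n j) \<le> sqrt (eps2 n)}"
      unfolding B_def by simp
    note P = per_nA[OF fin sets Beq Ppos op e2 sigma0_pos]
    show ?thesis using P(1) P(2) unfolding v_def mu_def by blast
  qed
  show ?thesis
  proof (intro exI[of _ CD] conjI allI impI CD0)
    fix \<delta> :: real assume \<delta>: "\<delta> > 0"
    define t where "t = (\<lambda>n. \<delta> * sigma0\<^sup>2 * (real n * eps2 n))"
    define \<Omega> where "\<Omega> = (\<lambda>n A. if good n then {y \<in> space (data_law n (p n) (X n) sigma0 (b0 n)).
                   - t n < (\<Sum>i<n. (y i - mu n i) * v n A i)} else {})"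
    show "\<exists>\<Omega> :: nat \<Rightarrow> nat set \<Rightarrow> (nat \<Rightarrow> real) set.
           (\<forall>n A. \<Omega> n A \<in> sets (data_law n (p n) (X n) sigma0 (b0 n)))
         \<and> (\<forall>e>0. \<forall>\<^sub>F n in sequentially.
              \<forall>A \<in> model_class (p n) (support (p n) (b0 n)) (m n).
                measure (data_law n (p n) (X n) sigma0 (b0 n))
                  (space (data_law n (p n) (X n) sigma0 (b0 n)) - \<Omega> n A) \<le> e)
         \<and> (\<forall>n. \<forall>A \<in> model_class (p n) (support (p n) (b0 n)) (m n). \<forall>y \<in> \<Omega> n A.
              Dn n (p n) (X n) sigma0 (b0 n) (ghs_prior sigma0 tau0 ac bc sig_eta (z n) A) A y
                \<ge> exp (- (CD + \<delta>) * real n * eps2 n))"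
    proof (intro exI[of _ \<Omega>] conjI allI impI ballI)
      fix n A
      show "\<Omega> n A \<in> sets (data_law n (p n) (X n) sigma0 (b0 n))"
      proof (cases "good n")
        case True
        have "(\<lambda>y. \<Sum>i<n. (y i - mu n i) * v n A i) \<in> borel_measurable (data_law n (p n) (X n) sigma0 (b0 n))"
          unfolding DL by (rule lin_meas)
        then show ?thesis unfolding \<Omega>_def using True by simp
      qed (simp add: \<Omega>_def)
    next
      fix e :: real assume e: "e > 0"
      define Q where "Q = K\<^sup>2 / (\<delta>\<^sup>2 * sigma0\<^sup>2 * e)"
      have evQ: "\<forall>\<^sub>F n in sequentially. Q \<le> s0 n * ln (m n)"
        using eps_div unfolding filterlim_at_top by blast
      show "\<forall>\<^sub>F n in sequentially.
              \<forall>A \<in> model_class (p n) (support (p n) (b0 n)) (m n).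
                measure (data_law n (p n) (X n) sigma0 (b0 n))
                  (space (data_law n (p n) (X n) sigma0 (b0 n)) - \<Omega> n A) \<le> e"
        using ev_good evQ
      proof eventually_elim
        case (elim n)
        show ?case
        proof
          fix A assume A: "A \<in> model_class (p n) (support (p n) (b0 n)) (m n)"
          define L where "L = s0 n * ln (m n)"
          have n0: "n > 0" and L0: "L > 0" using elim(1) unfolding good_def L_def by auto
          have tL: "t n = \<delta> * sigma0\<^sup>2 * L" unfolding t_def L_def using neps[OF n0] by simp
          have t0: "t n > 0" using tL \<delta> sigma0_pos L0 by simp
          have sv: "(\<Sum>i<n. (v n A i)\<^sup>2) \<le> K\<^sup>2 * L"
            using key[OF elim(1) A] neps[OF n0] unfolding L_def by (simp add: mult.assoc)
          have "space (data_law n (p n) (X n) sigma0 (b0 n)) - \<Omega> n A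
              = {y \<in> space (PiM {..<n} (\<lambda>i. density lborel (normal_density (mu n i) sigma0))).
                  (\<Sum>i<n. (y i - mu n i) * v n A i) \<le> - t n}"
            using elim(1) unfolding \<Omega>_def DL by auto
          then have "measure (data_law n (p n) (X n) sigma0 (b0 n)) (space (data_law n (p n) (X n) sigma0 (b0 n)) - \<Omega> n A)
              \<le> sigma0\<^sup>2 * (\<Sum>i<n. (v n A i)\<^sup>2) / (t n)\<^sup>2"
            unfolding DL using gauss_tail[OF sigma0_pos t0] by simp
          also have "\<dots> \<le> sigma0\<^sup>2 * (K\<^sup>2 * L) / (t n)\<^sup>2"
            using sv by (intro divide_right_mono mult_left_mono) auto
          also have "\<dots> = K\<^sup>2 / (\<delta>\<^sup>2 * sigma0\<^sup>2 * L)"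
            unfolding tL using \<delta> sigma0_pos L0 by (simp add: field_simps power2_eq_square)
          also have "\<dots> \<le> e"
          proof -
            have "K\<^sup>2 \<le> e * (\<delta>\<^sup>2 * sigma0\<^sup>2 * L)"
            proof -
              have "K\<^sup>2 = e * (\<delta>\<^sup>2 * sigma0\<^sup>2 * Q)" unfolding Q_def using e \<delta> sigma0_pos by simp
              also have "\<dots> \<le> e * (\<delta>\<^sup>2 * sigma0\<^sup>2 * L)"
                using elim(2) e \<delta> sigma0_pos unfolding L_def by (intro mult_left_mono) auto
              finally show ?thesis .
            qed
            then show ?thesis using \<delta> sigma0_pos L0 by (simp add: divide_le_eq mult.commute)
          qed
          finally show "measure (data_law n (p n) (X n) sigma0 (b0 n))
                  (space (data_law n (p n) (X n) sigma0 (b0 n)) - \<Omega> n A) \<le> e" .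
        qed
      qed
    next
      fix n A y
      assume A: "A \<in> model_class (p n) (support (p n) (b0 n)) (m n)" and y: "y \<in> \<Omega> n A"
      have g: "good n" using y unfolding \<Omega>_def by (auto split: if_splits)
      have ty: "- t n < (\<Sum>i<n. (y i - mu n i) * v n A i)" using y g unfolding \<Omega>_def by simp
      define L where "L = real n * eps2 n"
      have PB: "measure (Pi n A) (B n A) \<ge> exp (- C1 * L)"
        using g A unfolding good_def L_def by (simp add: mult.assoc)
      have K2: "(\<integral>b. lik n (p n) (X n) sigma0 (ext_coef A b) y / lik n (p n) (X n) sigma0 (b0 n) y \<partial>Pi n A)
         \<ge> measure (Pi n A) (B n A) * exp ((\<Sum>i<n. (y i - mu n i) * v n A i) / sigma0\<^sup>2
              - K\<^sup>2 * L / (2 * sigma0\<^sup>2))"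
        using key[OF g A] unfolding L_def by (simp add: mult.assoc)
      have "-(\<delta> * L) - K\<^sup>2 * L / (2 * sigma0\<^sup>2) \<le> (\<Sum>i<n. (y i - mu n i) * v n A i) / sigma0\<^sup>2 - K\<^sup>2 * L / (2 * sigma0\<^sup>2)"
      proof -
        have "- t n / sigma0\<^sup>2 \<le> (\<Sum>i<n. (y i - mu n i) * v n A i) / sigma0\<^sup>2"
          using ty sigma0_pos by (intro divide_right_mono) auto
        moreover have "- t n / sigma0\<^sup>2 = -(\<delta> * L)" unfolding t_def L_def using sigma0_pos by simp
        ultimately show ?thesis by linarith
      qed
      then have ex: "exp (-(\<delta> * L) - K\<^sup>2 * L / (2 * sigma0\<^sup>2))
          \<le> exp ((\<Sum>i<n. (y i - mu n i) * v n A i) / sigma0\<^sup>2 - K\<^sup>2 * L / (2 * sigma0\<^sup>2))" by simp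
      have "exp (- (CD + \<delta>) * real n * eps2 n) = exp (- C1 * L) * exp (-(\<delta> * L) - K\<^sup>2 * L / (2 * sigma0\<^sup>2))"
        unfolding CD_def L_def by (simp add: exp_add[symmetric] algebra_simps)
      also have "\<dots> \<le> measure (Pi n A) (B n A) * exp ((\<Sum>i<n. (y i - mu n i) * v n A i) / sigma0\<^sup>2 - K\<^sup>2 * L / (2 * sigma0\<^sup>2))"
        using PB ex by (intro mult_mono) auto
      also note K2
      finally show "Dn n (p n) (X n) sigma0 (b0 n) (ghs_prior sigma0 tau0 ac bc sig_eta (z n) A) A y
                \<ge> exp (- (CD + \<delta>) * real n * eps2 n)"
        unfolding Dn_def Pi_def .
    qed
  qed
qed

end
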